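(* Let $M=(M_{ij})$ be an $n\times n$ matrix (over a commutative ring) with $M_{ij}=0$ whenever $i+j\notin\{n+1,n+2\}$. Then $$\det(t-M)=\sum_{k=0}^n t^{n-k}(-1)^{\frac{k(k+1)}{2}}\sum_{(A,B)}\prod_{(i,j)\in A\cup B}M_{ij},$$ where the inner sum runs over pairs $(A,B)$ with $A\subset\{(i,j):i+j=n+1\}$, $B\subset\{(i,j):i+j=n+2\}$ (indices in $\{1,\dots,n\}$) such that: (1) $A$ and $B$ are both invariant under $(i,j)\mapsto(j,i)$; (2) the sets $\{i:(i,j)\in A\}$ and $\{i:(i,j)\in B\}$ are disjoint, and likewise $\{j:(i,j)\in A\}$ and $\{j:(i,j)\in B\}$ are disjoint; (3) $|A|+|B|=k$. *)

theory Defs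
  imports "Jordan_Normal_Form.Char_Poly"
begin

definition ent :: "'a mat \<Rightarrow> nat \<Rightarrow> nat \<Rightarrow> 'a" where
  "ent M i j = M $$ (i - 1, j - 1)"

definition antidiag :: "nat \<Rightarrow> nat \<Rightarrow> (nat \<times> nat) set" where
  "antidiag n d = {(i, j). i \<in> {1..n} \<and> j \<in> {1..n} \<and> i + j = d}"

definition swap_inv :: "(nat \<times> nat) set \<Rightarrow> bool" where
  "swap_inv A \<longleftrightarrow> (\<forall>(i, j) \<in> A. (j, i) \<in> A)"

definition adm_pairs :: "nat \<Rightarrow> nat \<Rightarrow> ((nat \<times> nat) set \<times> (nat \<times> nat) set) set" where
  "adm_pairs n k = {(A, B).
      A \<subseteq> antidiag n (n + 1) \<and> B \<subseteq> antidiag n (n + 2) \<and>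
      swap_inv A \<and> swap_inv B \<and>
      fst ` A \<inter> fst ` B = {} \<and> snd ` A \<inter> snd ` B = {} \<and>
      card A + card B = k}"

end

theory Submission
  imports Defs
begin

lemma involution_sign:
  assumes "finite N" "p permutes N" "\<forall>x. p (p x) = x"
  shows "even (card {x. p x \<noteq> x}) \<and> sign p = (-1) ^ (card {x. p x \<noteq> x} div 2)"
  using assms
proof (induction "card {x. p x \<noteq> x}" arbitrary: p rule: less_induct)
  case less
  show ?case
  proof (cases "{x. p x \<noteq> x} = {}")
    case True
    then have "p = id" by auto
    then show ?thesis using True by simp
  next
    case False
    then obtain a where a: "p a \<noteq> a" by auto
    define b where "b = p a"
    have pb: "p b = a" using less.prems(3) b_def by simp
    define q where "q = transpose a b \<circ> p"
    have fin: "finite {x. p x \<noteq> x}" using less.prems(1,2)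
      by (metis (mono_tags, lifting) finite_subset mem_Collect_eq permutes_not_in subsetI)
    have qx: "q x = (if x = a then a else if x = b then b else p x)" for x
    proof -
      have "x \<noteq> a \<Longrightarrow> x \<noteq> b \<Longrightarrow> p x \<noteq> a \<and> p x \<noteq> b"
        using less.prems(3) b_def pb by metis
      then show ?thesis unfolding q_def using pb b_def by (auto simp: transpose_def)
    qed
    have mv: "{x. q x \<noteq> x} = {x. p x \<noteq> x} - {a, b}"
      using qx a b_def pb by auto
    have ab: "a \<noteq> b" using a b_def by simp
    have card: "card {x. q x \<noteq> x} = card {x. p x \<noteq> x} - 2"
      using mv fin a b_def pb ab by (simp add: card_Diff_subset)
    have c2: "card {x. p x \<noteq> x} \<ge> 2"
    proof -
      have "{a, b} \<subseteq> {x. p x \<noteq> x}" using a b_def pb ab by auto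
      then have "card {a,b} \<le> card {x. p x \<noteq> x}" using fin by (rule card_mono[rotated])
      then show ?thesis using ab by simp
    qed
    have aN: "a \<in> N" using a less.prems(2) by (meson permutes_not_in)
    have bN: "b \<in> N" using b_def aN less.prems(2) by (simp add: permutes_in_image)
    have qperm: "q permutes N" unfolding q_def
      by (rule permutes_compose[OF less.prems(2) permutes_swap_id[OF aN bN]])
    have qinv: "\<forall>x. q (q x) = x" using qx less.prems(3) pb b_def by (metis (no_types))
    have IH: "even (card {x. q x \<noteq> x}) \<and> sign q = (-1) ^ (card {x. q x \<noteq> x} div 2)"
      using less.hyps[of q] card c2 qperm qinv less.prems(1) by simp
    have pq: "p = transpose a b \<circ> q" unfolding q_def by (rule ext) simp
    have "sign p = sign (transpose a b) * sign q"
      unfolding pq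
      by (rule sign_compose) (auto intro: permutation_permutes[THEN iffD2] qperm less.prems(1)
           simp: permutation_swap_id)
    also have "\<dots> = - sign q" using ab by (simp add: sign_swap_id)
    finally have sp: "sign p = - sign q" .
    obtain m where m: "card {x. p x \<noteq> x} = m + 2" using c2 le_Suc_ex by (metis add.commute)
    show ?thesis using IH sp card m by auto
  qed
qed

lemma near_perm_step:
  fixes f :: "nat \<Rightarrow> int"
  assumes fin: "finite N" and p: "p permutes N" and inj: "inj_on f N"
    and near: "\<forall>x\<in>N. f (p x) \<le> f x + 1 \<and> f x \<le> f (p x) + 1"
    and x: "x \<in> N" and up: "f (p x) = f x + 1"
  shows "p (p x) = x"
proof -
  define L where "L = {y\<in>N. f y \<le> f x}"
  have finL: "finite L" using fin unfolding L_def by auto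
  have LN: "L \<subseteq> N" unfolding L_def by auto
  have pxN: "p x \<in> N" using p x by (simp add: permutes_in_image)
  have cardeq: "card (p ` L) = card L"
    using card_image[OF inj_on_subset[OF permutes_inj_on[OF p]]] by auto
  have "p x \<in> p ` L" using x unfolding L_def by auto
  moreover have "p x \<notin> L" using up unfolding L_def by auto
  ultimately have "\<not> L \<subseteq> p ` L"
    using card_subset_eq[OF finite_imageI[OF finL]] cardeq by metis
  then obtain z where zL: "z \<in> L" and znot: "z \<notin> p ` L" by auto
  have "z \<in> p ` N" using zL LN permutes_image[OF p] by auto
  then obtain w where wN: "w \<in> N" and zw: "z = p w" by auto
  have "w \<notin> L" using znot zw by auto
  then have fw: "f w > f x" using wN unfolding L_def by auto
  have fz: "f z \<le> f x" using zL unfolding L_def by auto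
  have "f z + 1 \<ge> f w" using near wN zw by auto
  then have "f w = f (p x)" "f z = f x" using fw fz up by auto
  then have "w = p x" "z = x" using inj wN pxN zL LN x by (auto dest: inj_onD)
  then show ?thesis using zw by simp
qed

lemma near_perm_invol:
  fixes f :: "nat \<Rightarrow> int"
  assumes fin: "finite N" and p: "p permutes N" and inj: "inj_on f N"
    and near: "\<forall>x\<in>N. f (p x) \<le> f x + 1 \<and> f x \<le> f (p x) + 1"
  shows "p (p x) = x"
proof (cases "x \<in> N")
  case False
  then show ?thesis using p by (simp add: permutes_not_in)
next
  case x: True
  have pxN: "p x \<in> N" using p x by (simp add: permutes_in_image)
  consider "f (p x) = f x + 1" | "f (p x) = f x" | "f (p x) = f x - 1" using near x by force
  then show ?thesis
  proof cases
    case 1 then show ?thesis using near_perm_step[OF fin p inj near x] by simp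
  next
    case 2 then have "p x = x" using inj x pxN by (auto dest: inj_onD)
    then show ?thesis by simp
  next
    case 3
    have inj': "inj_on (\<lambda>y. - f y) N" using inj by (auto simp: inj_on_def)
    have near': "\<forall>x\<in>N. - f (p x) \<le> - f x + 1 \<and> - f x \<le> - f (p x) + 1" using near by force
    show ?thesis using near_perm_step[OF fin p inj' near' x] 3 by simp
  qed
qed

definition pos :: "nat \<Rightarrow> nat \<Rightarrow> int" where
  "pos n i = (if 2 * i < n then 2 * int i else 2 * int n - 1 - 2 * int i)"

lemma pos_inj: "inj_on (pos n) {0..<n}"
  unfolding inj_on_def pos_def by (auto split: if_splits) presburger+

lemma pos_near:
  assumes "i < n" "j < n" "j = i \<or> i + j = n - 1 \<or> i + j = n"
  shows "pos n j \<le> pos n i + 1 \<and> pos n i \<le> pos n j + 1"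
  using assms unfolding pos_def by (auto split: if_splits)

lemma const_poly_sum: "finite A \<Longrightarrow> [:sum g A:] = (\<Sum>x\<in>A. [:g x:])"
proof (induction A rule: finite_induct)
  case (insert x F)
  have e: "[:a + b:] = [:a:] + [:b:]" for a b :: 'b by simp
  show ?case by (simp only: sum.insert[OF insert(1,2)] e insert(3))
qed simp

lemma const_poly_prod: fixes g :: "_ \<Rightarrow> 'b::comm_ring_1" shows "finite A \<Longrightarrow> [:prod g A:] = (\<Prod>x\<in>A. [:g x:])"
proof (induction A rule: finite_induct)
  case (insert x F)
  have e: "[:a * b:] = [:a:] * [:b:]" for a b :: 'b by simp
  show ?case by (simp only: prod.insert[OF insert(1,2)] e insert(3))
qed simp

lemma neg1_pow_mod2': "((-1 :: 'a :: ring_1) ^ a) = (-1) ^ (a mod 2)"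
proof -
  have "(-1::'a)^a = (-1)^(2*(a div 2) + a mod 2)" by simp
  also have "\<dots> = (-1)^(a mod 2)" by (simp only: power_add power_mult) simp
  finally show ?thesis .
qed

lemma neg1_pow_mod2: "a mod 2 = b mod 2 \<Longrightarrow> ((-1 :: 'a :: ring_1) ^ a) = (-1) ^ b"
  by (metis neg1_pow_mod2')

lemma sign_arith:
  assumes "even m" "e \<le> (1::nat)"
  shows "((-1 :: 'a :: ring_1) ^ (m div 2)) * (-1) ^ (m + e) = (-1) ^ ((m + e) * (m + e + 1) div 2)"
proof -
  obtain t where m: "m = 2 * t" using assms(1) by auto
  have "((-1 :: 'a) ^ (m div 2)) * (-1) ^ (m + e) = (-1) ^ (t + e)"
    by (simp add: m power_add power_mult)
  also have "\<dots> = (-1) ^ ((m + e) * (m + e + 1) div 2)"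
  proof (rule neg1_pow_mod2)
    show "(t + e) mod 2 = (m + e) * (m + e + 1) div 2 mod 2"
    proof (cases "e = 0")
      case True
      have "(m + e) * (m + e + 1) div 2 = t + 2 * (t * t)" using True m by (simp add: algebra_simps)
      then show ?thesis using True by simp
    next
      case False
      then have e: "e = 1" using assms(2) by simp
      have "(m + e) * (m + e + 1) div 2 = (t + 1) + 2 * (t * t + t)" using e m by (simp add: algebra_simps)
      then show ?thesis using e by simp presburger
    qed
  qed
  finally show ?thesis .
qed

lemma const_mult_sum:
  fixes g :: "'c \<Rightarrow> 'd \<Rightarrow> 'b::comm_ring_1"
  assumes "finite F"
  shows "Y * [:s * (\<Sum>(A, B)\<in>F. g A B):] = (\<Sum>(A, B)\<in>F. Y * [:s * g A B:])"
proof -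
  have "Y * [:s * (\<Sum>(A, B)\<in>F. g A B):] = Y * [:(\<Sum>x\<in>F. s * (case x of (A, B) \<Rightarrow> g A B)):]"
    by (simp add: sum_distrib_left)
  also have "\<dots> = Y * (\<Sum>x\<in>F. [:s * (case x of (A, B) \<Rightarrow> g A B):])"
    using assms by (simp add: const_poly_sum)
  also have "\<dots> = (\<Sum>x\<in>F. Y * [:s * (case x of (A, B) \<Rightarrow> g A B):])"
    by (simp add: sum_distrib_left)
  also have "\<dots> = (\<Sum>(A, B)\<in>F. Y * [:s * g A B:])"
    by (rule sum.cong) auto
  finally show ?thesis .
qed

lemma finite_antidiag: "finite (antidiag n d)"
  by (rule finite_subset[of _ "{1..n} \<times> {1..n}"]) (auto simp: antidiag_def)

lemma finite_adm: "finite (adm_pairs n k)"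
  by (rule finite_subset[of _ "Pow (antidiag n (n+1)) \<times> Pow (antidiag n (n+2))"])
     (auto simp: adm_pairs_def finite_antidiag)

theorem mainTheorem13:
  fixes M :: "'a :: comm_ring_1 mat" and n :: nat
  assumes "M \<in> carrier_mat n n"
    and "\<forall>i \<in> {1..n}. \<forall>j \<in> {1..n}. i + j \<notin> {n + 1, n + 2} \<longrightarrow> ent M i j = 0"
  shows "char_poly M =
    (\<Sum>k = 0..n. [:0, 1:] ^ (n - k) *
        [: (-1) ^ (k * (k + 1) div 2) *
           (\<Sum>(A, B) \<in> adm_pairs n k. \<Prod>(i, j) \<in> A \<union> B. ent M i j) :])"
proof -
  define N where "N = {0..<n}"
  define c where "c i j = M $$ (i, j)" for i j
  define X :: "'a poly" where "X = [:0,1:]"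
  have finN: "finite N" by (simp add: N_def)
  have supp: "c i j = 0" if "i < n" "j < n" "i + j \<noteq> n - 1" "i + j \<noteq> n" for i j
  proof -
    have "Suc i \<in> {1..n}" "Suc j \<in> {1..n}" using that by auto
    moreover have "Suc i + Suc j \<notin> {n+1, n+2}" using that by auto
    ultimately have "ent M (Suc i) (Suc j) = 0" using assms(2) by blast
    then show "c i j = 0" by (simp add: ent_def c_def)
  qed
  define P where "P = {p. p permutes N}"
  define T where "T p S = signof p * (\<Prod>i\<in>S. [:- c i (p i):]) * (\<Prod>i\<in>N - S. if p i = i then X else 0)" for p S
  define D where "D = {(p,S). p permutes N \<and> S \<subseteq> N \<and> (\<forall>i\<in>N-S. p i = i) \<and> (\<forall>i\<in>S. i + p i = n - 1 \<or> i + p i = n)}"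
  have entry: "char_poly_matrix M $$ (i, j) = [:- c i j:] + (if j = i then X else 0)" if "i < n" "j < n" for i j
    using that assms(1) unfolding char_poly_matrix_def X_def c_def by auto
  have "char_poly M = (\<Sum>p\<in>P. signof p * (\<Prod>i\<in>N. char_poly_matrix M $$ (i, p i)))"
    unfolding char_poly_def P_def N_def by (rule det_def'[OF char_poly_matrix_closed[OF assms(1)]])
  also have "\<dots> = (\<Sum>p\<in>P. \<Sum>S\<in>Pow N. T p S)"
  proof (rule sum.cong[OF refl])
    fix p assume "p \<in> P"
    then have p: "p permutes N" by (simp add: P_def)
    have "(\<Prod>i\<in>N. char_poly_matrix M $$ (i, p i)) = (\<Prod>i\<in>N. [:- c i (p i):] + (if p i = i then X else 0))"
      by (rule prod.cong[OF refl]) (use entry permutes_in_image[OF p] in \<open>auto simp: N_def\<close>)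
    also have "\<dots> = (\<Sum>S\<in>Pow N. (\<Prod>i\<in>S. [:- c i (p i):]) * (\<Prod>i\<in>N - S. if p i = i then X else 0))"
      by (rule prod_add) (simp add: N_def)
    finally show "signof p * (\<Prod>i\<in>N. char_poly_matrix M $$ (i, p i)) = (\<Sum>S\<in>Pow N. T p S)"
      unfolding T_def by (simp add: sum_distrib_left mult.assoc)
  qed
  also have "\<dots> = (\<Sum>(p,S)\<in>P \<times> Pow N. T p S)" by (rule sum.cartesian_product)
  also have "\<dots> = (\<Sum>(p,S)\<in>D. T p S)"
  proof (rule sum.mono_neutral_right)
    show "finite (P \<times> Pow N)" using finN by (simp add: P_def finite_permutations)
    show "D \<subseteq> P \<times> Pow N" by (auto simp: D_def P_def)
    show "\<forall>x\<in>P \<times> Pow N - D. (case x of (p, S) \<Rightarrow> T p S) = 0"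
    proof
      fix x assume x: "x \<in> P \<times> Pow N - D"
      obtain p S where xpS: "x = (p, S)" by (cases x)
      have pS: "p \<in> P" "S \<in> Pow N" "(p, S) \<notin> D" using x xpS by auto
      have p: "p permutes N" using pS by (simp add: P_def)
      consider i where "i \<in> N - S" "p i \<noteq> i" | i where "i \<in> S" "i + p i \<noteq> n - 1" "i + p i \<noteq> n"
        using pS p unfolding D_def by auto
      then have "T p S = 0"
      proof cases
        case 1
        have "(\<Prod>i\<in>N - S. if p i = i then X else 0) = 0"
          by (rule prod_zero) (use 1 finN in auto)
        then show ?thesis by (simp add: T_def)
      next
        case 2
        have "i < n" "p i < n" using 2 pS permutes_in_image[OF p] by (auto simp: N_def)
        then have "c i (p i) = 0" using supp 2 by blast
        then have "(\<Prod>i\<in>S. [:- c i (p i):]) = 0"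
          using 2 pS finN by (intro prod_zero) (auto intro: finite_subset)
        then show ?thesis by (simp add: T_def)
      qed
      then show "(case x of (p, S) \<Rightarrow> T p S) = 0" by (simp add: xpS)
    qed
  qed
  also have "\<dots> = (\<Sum>k = 0..n. \<Sum>(A, B)\<in>adm_pairs n k. X ^ (n - k) * [: (-1) ^ (k * (k + 1) div 2) *
           (\<Prod>(i, j) \<in> A \<union> B. ent M i j) :])"
  proof -
  define R where "R AB = (case AB of (A, B) \<Rightarrow> X ^ (n - (card A + card B)) *
      [: (-1) ^ ((card A + card B) * (card A + card B + 1) div 2) * (\<Prod>(i, j) \<in> A \<union> B. ent M i j) :])"
    for AB :: "(nat \<times> nat) set \<times> (nat \<times> nat) set"
  define E where "E = (\<Union>k\<in>{0..n}. adm_pairs n k)"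
  have rhs: "(\<Sum>k = 0..n. \<Sum>(A, B)\<in>adm_pairs n k. X ^ (n - k) * [: (-1) ^ (k * (k + 1) div 2) *
           (\<Prod>(i, j) \<in> A \<union> B. ent M i j) :]) = sum R E"
  proof -
    have "(\<Sum>k = 0..n. \<Sum>(A, B)\<in>adm_pairs n k. X ^ (n - k) * [: (-1) ^ (k * (k + 1) div 2) *
           (\<Prod>(i, j) \<in> A \<union> B. ent M i j) :]) = (\<Sum>k = 0..n. sum R (adm_pairs n k))"
      by (rule sum.cong[OF refl], rule sum.cong[OF refl]) (clarsimp simp: R_def adm_pairs_def)
    also have "\<dots> = sum R E" unfolding E_def
      apply (rule sum.UNION_disjoint[symmetric])
        apply simp
       apply (simp add: finite_adm)
      apply (auto simp: adm_pairs_def)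
      done
    finally show ?thesis .
  qed
  define g where "g p = (\<lambda>i. (Suc i, Suc (p i)))" for p :: "nat \<Rightarrow> nat"
  define h where "h = (\<lambda>(p, S). (g p ` {i\<in>S. i + p i = n - 1}, g p ` {i\<in>S. i + p i = n}))"
  have injg: "inj_on (g p) A" for p A by (auto simp: inj_on_def g_def)
  have Dprops: "(\<forall>x. p (p x) = x) \<and> (\<forall>i\<in>S. p i \<in> S)" if "(p, S) \<in> D" for p S
  proof -
    from that have p: "p permutes N" and SN: "S \<subseteq> N" and fx: "\<forall>i\<in>N-S. p i = i"
      and sm: "\<forall>i\<in>S. i + p i = n - 1 \<or> i + p i = n" by (auto simp: D_def)
    have inv: "p (p x) = x" for x
    proof (rule near_perm_invol[OF finN p])
      show "inj_on (pos n) N" using pos_inj by (simp add: N_def)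
      show "\<forall>x\<in>N. pos n (p x) \<le> pos n x + 1 \<and> pos n x \<le> pos n (p x) + 1"
      proof
        fix x assume x: "x \<in> N"
        have "x < n" "p x < n" using x permutes_in_image[OF p] by (auto simp: N_def)
        moreover have "p x = x \<or> x + p x = n - 1 \<or> x + p x = n" using fx sm x by (cases "x \<in> S") auto
        ultimately show "pos n (p x) \<le> pos n x + 1 \<and> pos n x \<le> pos n (p x) + 1" by (rule pos_near)
      qed
    qed
    have "p i \<in> S" if iS: "i \<in> S" for i
    proof (rule ccontr)
      assume nS: "p i \<notin> S"
      have "p i \<in> N" using iS SN permutes_in_image[OF p] by auto
      then have "p (p i) = p i" using fx nS by auto
      then have "p i = i" using inv by simp
      then show False using nS iS by simp
    qed
    then show ?thesis using inv by blast
  qed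
  have hE: "h (p, S) \<in> E \<and> T p S = R (h (p, S))" if pSD: "(p, S) \<in> D" for p S
  proof -
    from pSD have p: "p permutes N" and SN: "S \<subseteq> N" and fx: "\<forall>i\<in>N-S. p i = i"
      and sm: "\<forall>i\<in>S. i + p i = n - 1 \<or> i + p i = n" by (auto simp: D_def)
    have inv: "\<And>x. p (p x) = x" and Sinv: "\<And>i. i \<in> S \<Longrightarrow> p i \<in> S" using Dprops[OF pSD] by auto
    have finS: "finite S" using SN finN by (rule finite_subset)
    have Sn: "i \<in> S \<Longrightarrow> i < n" for i using SN by (auto simp: N_def)
    define S1 where "S1 = {i\<in>S. i + p i = n - 1}"
    define S2 where "S2 = {i\<in>S. i + p i = n}"
    define A where "A = g p ` S1"
    define B where "B = g p ` S2"
    have hpS: "h (p, S) = (A, B)" by (simp add: h_def A_def B_def S1_def S2_def)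
    have S12: "S1 \<inter> S2 = {}" "S1 \<union> S2 = S"
      unfolding S1_def S2_def using Sn apply fastforce using sm by blast
    have AB: "A \<union> B = g p ` S" unfolding A_def B_def using S12 by (simp add: image_Un[symmetric])
    have cardAB: "card A + card B = card S"
    proof -
      have "card A = card S1" "card B = card S2" unfolding A_def B_def
        by (simp_all add: card_image[OF injg])
      moreover have "card S1 + card S2 = card S"
        using card_Un_disjoint[of S1 S2] S12 finS by (simp add: S1_def S2_def)
      ultimately show ?thesis by simp
    qed
    have pin: "i \<in> S \<Longrightarrow> p i < n" for i using Sinv Sn by blast
    have admAB: "(A, B) \<in> adm_pairs n (card S)"
      unfolding adm_pairs_def
    proof (clarsimp, intro conjI)
      show "A \<subseteq> antidiag n (Suc n)"
      proof
        fix z assume "z \<in> A"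
        then obtain i where i: "i \<in> S" "i + p i = n - 1" "z = (Suc i, Suc (p i))"
          by (auto simp: A_def S1_def g_def)
        have "i < n" "p i < n" using i Sn pin by auto
        then show "z \<in> antidiag n (Suc n)" using i by (auto simp: antidiag_def)
      qed
      show "B \<subseteq> antidiag n (Suc (Suc n))"
      proof
        fix z assume "z \<in> B"
        then obtain i where i: "i \<in> S" "i + p i = n" "z = (Suc i, Suc (p i))"
          by (auto simp: B_def S2_def g_def)
        have "i < n" "p i < n" using i Sn pin by auto
        then show "z \<in> antidiag n (Suc (Suc n))" using i by (auto simp: antidiag_def)
      qed
      show "swap_inv A" unfolding swap_inv_def
      proof
        fix z assume "z \<in> A"
        then obtain i where i: "i \<in> S" "i + p i = n - 1" "z = (Suc i, Suc (p i))"
          by (auto simp: A_def S1_def g_def)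
        have "(Suc (p i), Suc i) \<in> A" unfolding A_def S1_def g_def
          using i Sinv inv by (intro image_eqI[of _ _ "p i"]) auto
        then show "case z of (a, b) \<Rightarrow> (b, a) \<in> A" using i by simp
      qed
      show "swap_inv B" unfolding swap_inv_def
      proof
        fix z assume "z \<in> B"
        then obtain i where i: "i \<in> S" "i + p i = n" "z = (Suc i, Suc (p i))"
          by (auto simp: B_def S2_def g_def)
        have "(Suc (p i), Suc i) \<in> B" unfolding B_def S2_def g_def
          using i Sinv inv by (intro image_eqI[of _ _ "p i"]) auto
        then show "case z of (a, b) \<Rightarrow> (b, a) \<in> B" using i by simp
      qed
      show "fst ` A \<inter> fst ` B = {}" using S12 by (auto simp: A_def B_def g_def)
      show "snd ` A \<inter> snd ` B = {}" using S12 by (auto simp: A_def B_def g_def) (metis inv IntI empty_iff)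
      show "card A + card B = card S" by (rule cardAB)
    qed
    have "card S \<le> n" using card_mono[OF finN SN] by (simp add: N_def)
    then have inE: "h (p, S) \<in> E" using admAB hpS by (auto simp: E_def)
    have prodAB: "(\<Prod>(i, j) \<in> A \<union> B. ent M i j) = (\<Prod>i\<in>S. c i (p i))"
      unfolding AB by (subst prod.reindex[OF injg]) (simp add: g_def ent_def c_def)
    have prodX: "(\<Prod>i\<in>N - S. if p i = i then X else 0) = X ^ (n - card S)"
    proof -
      have "(\<Prod>i\<in>N - S. if p i = i then X else 0) = (\<Prod>i\<in>N - S. X)"
        using fx by (intro prod.cong) auto
      also have "\<dots> = X ^ (n - card S)" using card_Diff_subset[OF finS SN] by (simp add: N_def)
      finally show ?thesis .
    qed
    have prodC: "(\<Prod>i\<in>S. [:- c i (p i):]) = [:(-1) ^ card S * (\<Prod>i\<in>S. c i (p i)):]"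
      by (simp add: const_poly_prod[OF finS, symmetric] prod_uminus)
    define m where "m = card {x. p x \<noteq> x}"
    have sg: "even m \<and> sign p = (-1) ^ (m div 2)" unfolding m_def
      using involution_sign[OF finN p] inv by blast
    define F where "F = {i\<in>S. p i = i}"
    have mvS: "{x. p x \<noteq> x} \<subseteq> S" using fx permutes_not_in[OF p] by blast
    have SF: "S = {x. p x \<noteq> x} \<union> F" "{x. p x \<noteq> x} \<inter> F = {}" using mvS by (auto simp: F_def)
    have cardS: "card S = m + card F" unfolding m_def
      using card_Un_disjoint[of "{x. p x \<noteq> x}" F] SF finS by (metis finite_Un)
    have "card F \<le> Suc 0"
    proof (subst card_le_Suc0_iff_eq)
      show "finite F" using finS by (simp add: F_def)
      show "\<forall>a\<in>F. \<forall>b\<in>F. a = b"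
      proof (intro ballI)
        fix a b assume "a \<in> F" "b \<in> F"
        then have "a + a = n - 1 \<or> a + a = n" "b + b = n - 1 \<or> b + b = n" "a < n"
          using sm Sn by (auto simp: F_def)
        then show "a = b" by presburger
      qed
    qed
    then have e1: "card F \<le> 1" by simp
    have negpow: "((-1) :: 'a poly) ^ t = [:(-1) ^ t:]" for t by (induction t) simp_all
    have "T p S = [:(-1) ^ (m div 2):] * [:(-1) ^ card S * (\<Prod>i\<in>S. c i (p i)):] * X ^ (n - card S)"
      unfolding T_def prodX prodC using sg by (simp add: negpow)
    also have "\<dots> = X ^ (n - card S) * [:((-1) ^ (m div 2) * (-1) ^ card S) * (\<Prod>i\<in>S. c i (p i)):]"
      by (simp add: mult.commute mult.left_commute)
    also have "\<dots> = X ^ (n - card S) * [:(-1) ^ (card S * (card S + 1) div 2) * (\<Prod>i\<in>S. c i (p i)):]"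
      unfolding cardS sign_arith[OF conjunct1[OF sg] e1] by (rule refl)
    also have "\<dots> = R (h (p, S))" unfolding hpS R_def prod.case cardAB prodAB by (rule refl)
    finally show ?thesis using inE by simp
  qed
  have gS: "fst (h (p, S)) \<union> snd (h (p, S)) = g p ` S" if "(p, S) \<in> D" for p S
  proof -
    have "\<forall>i\<in>S. i + p i = n - 1 \<or> i + p i = n" using that by (auto simp: D_def)
    then have "S = {i\<in>S. i + p i = n - 1} \<union> {i\<in>S. i + p i = n}" by blast
    then show ?thesis unfolding h_def by (metis (no_types, lifting) case_prod_conv fst_conv snd_conv image_Un)
  qed
  have injh: "inj_on h D"
  proof (rule inj_onI)
    fix x y assume x: "x \<in> D" and y: "y \<in> D" and hxy: "h x = h y"
    obtain p S where xpS: "x = (p, S)" by (cases x)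
    obtain p' S' where ypS: "y = (p', S')" by (cases y)
    have D1: "(p, S) \<in> D" and D2: "(p', S') \<in> D" using x y xpS ypS by auto
    have eq: "g p ` S = g p' ` S'" using gS[OF D1] gS[OF D2] hxy xpS ypS by simp
    have "fst ` g p ` S = fst ` g p' ` S'" using eq by simp
    then have "Suc ` S = Suc ` S'" by (simp add: image_image g_def)
    then have SS: "S = S'" by (simp add: inj_image_eq_iff)
    have "p i = p' i" for i
    proof (cases "i \<in> S")
      case True
      then have "g p i \<in> g p' ` S'" using eq by blast
      then show ?thesis by (auto simp: g_def)
    next
      case False
      show ?thesis
      proof (cases "i \<in> N")
        case True
        then show ?thesis using False SS D1 D2 by (auto simp: D_def)
      next
        case nN: False
        have "p permutes N" "p' permutes N" using D1 D2 by (auto simp: D_def)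
        then show ?thesis using nN by (simp add: permutes_not_in)
      qed
    qed
    then show "x = y" using xpS ypS SS by auto
  qed
  have surjh: "E \<subseteq> h ` D"
  proof
    fix AB assume AB: "AB \<in> E"
    obtain A B where ABe: "AB = (A, B)" by (cases AB)
    have A: "A \<subseteq> antidiag n (n + 1)" and B: "B \<subseteq> antidiag n (n + 2)"
      and sA: "swap_inv A" and sB: "swap_inv B"
      and dfst: "fst ` A \<inter> fst ` B = {}" and dsnd: "snd ` A \<inter> snd ` B = {}"
      using AB ABe by (auto simp: E_def adm_pairs_def)
    have Am: "1 \<le> a \<and> a \<le> n \<and> 1 \<le> b \<and> b \<le> n \<and> a + b = n + 1" if "(a, b) \<in> A" for a b
      using A that by (auto simp: antidiag_def)
    have Bm: "1 \<le> a \<and> a \<le> n \<and> 1 \<le> b \<and> b \<le> n \<and> a + b = n + 2" if "(a, b) \<in> B" for a b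
      using B that by (auto simp: antidiag_def)
    have As: "(b, a) \<in> A" if "(a, b) \<in> A" for a b using sA that by (auto simp: swap_inv_def)
    have Bs: "(b, a) \<in> B" if "(a, b) \<in> B" for a b using sB that by (auto simp: swap_inv_def)
    have dAB: "False" if "(a, b) \<in> A" "(a, b') \<in> B" for a b b'
      using dfst that by (metis IntI empty_iff fst_conv image_eqI)
    define p where "p i = (if i < n \<and> (Suc i, n - i) \<in> A then n - 1 - i
        else if i < n \<and> (Suc i, Suc n - i) \<in> B then n - i else i)" for i
    define S where "S = {i\<in>N. (Suc i, n - i) \<in> A \<or> (Suc i, Suc n - i) \<in> B}"
    have inv: "p (p x) = x" for x
    proof (cases "x < n \<and> (Suc x, n - x) \<in> A")
      case True
      define y where "y = n - 1 - x"
      have px: "p x = y" using True by (simp add: p_def y_def)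
      have "y < n" "Suc y = n - x" "n - y = Suc x" using True by (auto simp: y_def)
      moreover have "(n - x, Suc x) \<in> A" using As True by simp
      ultimately have "p y = n - 1 - y" by (simp add: p_def)
      then show ?thesis using px True by (simp add: y_def)
    next
      case nA: False
      show ?thesis
      proof (cases "x < n \<and> (Suc x, Suc n - x) \<in> B")
        case True
        define y where "y = n - x"
        have px: "p x = y" using True nA by (simp add: p_def y_def)
        have "1 \<le> x" using Bm[of "Suc x" "Suc n - x"] True by auto
        then have yy: "y < n" "Suc y = Suc n - x" "Suc n - y = Suc x" "n - y = x" using True by (auto simp: y_def)
        have Bs': "(Suc n - x, Suc x) \<in> B" using Bs True by simp
        have "(Suc y, n - y) \<notin> A" using dAB[of "Suc n - x" x "Suc x"] Bs' yy by auto
        then have "p y = n - y" using yy Bs' by (simp add: p_def)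
        then show ?thesis using px yy by simp
      next
        case False
        have "p x = x" using nA False unfolding p_def by auto
        then show ?thesis by simp
      qed
    qed
    have pperm: "p permutes N"
      unfolding permutes_def
    proof (intro conjI allI impI)
      fix x assume "x \<notin> N" then show "p x = x" by (simp add: p_def N_def)
    next
      fix y show "\<exists>!x. p x = y" by (metis inv)
    qed
    have pSD: "(p, S) \<in> D" unfolding D_def
    proof (clarify, intro conjI)
      show "p permutes N" by (rule pperm)
      show "S \<subseteq> N" by (auto simp: S_def)
      show "\<forall>i\<in>N - S. p i = i" by (auto simp: S_def p_def)
      show "\<forall>i\<in>S. i + p i = n - 1 \<or> i + p i = n" by (auto simp: S_def p_def N_def)
    qed
    have hA: "g p ` {i\<in>S. i + p i = n - 1} = A"
    proof
      show "g p ` {i\<in>S. i + p i = n - 1} \<subseteq> A"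
      proof (rule image_subsetI)
        fix i assume "i \<in> {i\<in>S. i + p i = n - 1}"
        then have i: "i \<in> S" "i + p i = n - 1" by auto
        then have iN: "i < n" by (simp add: S_def N_def)
        show "g p i \<in> A"
        proof (cases "(Suc i, n - i) \<in> A")
          case True then show ?thesis using iN by (simp add: g_def p_def Suc_diff_Suc)
        next
          case False
          then have "(Suc i, Suc n - i) \<in> B" using i by (simp add: S_def)
          then have "p i = n - i" using False iN by (simp add: p_def)
          then show ?thesis using i iN by simp
        qed
      qed
      show "A \<subseteq> g p ` {i\<in>S. i + p i = n - 1}"
      proof (rule subsetI)
        fix z assume z: "z \<in> A"
        obtain a b where zab: "z = (a, b)" by (cases z)
        have ab: "(a, b) \<in> A" using z zab by simp
        define i where "i = a - 1"
        have m: "1 \<le> a" "a \<le> n" "b \<le> n" "a + b = n + 1" using Am[OF ab] by auto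
        then have ai: "a = Suc i" "b = n - i" "i < n" by (auto simp: i_def)
        then have iA: "(Suc i, n - i) \<in> A" using ab by simp
        then have iS: "i \<in> S" using ai by (simp add: S_def N_def)
        have pi: "p i = n - 1 - i" using iA ai by (simp add: p_def)
        have "g p i = (a, b)" using pi ai by (simp add: g_def)
        moreover have "i + p i = n - 1" using pi ai by simp
        ultimately show "z \<in> g p ` {i\<in>S. i + p i = n - 1}" using iS zab by force
      qed
    qed
    have hB: "g p ` {i\<in>S. i + p i = n} = B"
    proof
      show "g p ` {i\<in>S. i + p i = n} \<subseteq> B"
      proof (rule image_subsetI)
        fix i assume "i \<in> {i\<in>S. i + p i = n}"
        then have i: "i \<in> S" "i + p i = n" by auto
        then have iN: "i < n" by (simp add: S_def N_def)
        show "g p i \<in> B"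
        proof (cases "(Suc i, n - i) \<in> A")
          case True
          then have "p i = n - 1 - i" using iN by (simp add: p_def)
          then show ?thesis using i iN by simp
        next
          case False
          then have iB: "(Suc i, Suc n - i) \<in> B" using i by (simp add: S_def)
          then have "p i = n - i" using False iN by (simp add: p_def)
          then show ?thesis using iB iN by (simp add: g_def Suc_diff_le)
        qed
      qed
      show "B \<subseteq> g p ` {i\<in>S. i + p i = n}"
      proof (rule subsetI)
        fix z assume z: "z \<in> B"
        obtain a b where zab: "z = (a, b)" by (cases z)
        have ab: "(a, b) \<in> B" using z zab by simp
        define i where "i = a - 1"
        have m: "1 \<le> a" "a \<le> n" "b \<le> n" "a + b = n + 2" using Bm[OF ab] by auto
        then have ai: "a = Suc i" "b = Suc n - i" "i < n" by (auto simp: i_def)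
        then have iB: "(Suc i, Suc n - i) \<in> B" using ab by simp
        have nA: "(Suc i, n - i) \<notin> A" using dAB[of "Suc i" "n - i" "Suc n - i"] iB by blast
        then have iS: "i \<in> S" using ai iB by (simp add: S_def N_def)
        have pi: "p i = n - i" using iB nA ai by (simp add: p_def)
        have "g p i = (a, b)" using pi ai by (simp add: g_def Suc_diff_le)
        moreover have "i + p i = n" using pi ai by simp
        ultimately show "z \<in> g p ` {i\<in>S. i + p i = n}" using iS zab by force
      qed
    qed
    have "h (p, S) = AB" using hA hB ABe by (simp add: h_def)
    then show "AB \<in> h ` D" using pSD by force
  qed
  have hD: "h ` D = E" using hE surjh by auto
  have "(\<Sum>(p,S)\<in>D. T p S) = sum (R \<circ> h) D"
    by (rule sum.cong[OF refl]) (use hE in auto)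
  also have "\<dots> = sum R E" using sum.reindex[OF injh, of R] hD by simp
  finally have "(\<Sum>(p,S)\<in>D. T p S) = sum R E" .
  then show "(\<Sum>(p,S)\<in>D. T p S) = (\<Sum>k = 0..n. \<Sum>(A, B)\<in>adm_pairs n k. X ^ (n - k) * [: (-1) ^ (k * (k + 1) div 2) *
           (\<Prod>(i, j) \<in> A \<union> B. ent M i j) :])" using rhs by simp
  qed
  also have "\<dots> = (\<Sum>k = 0..n. X ^ (n - k) * [: (-1) ^ (k * (k + 1) div 2) *
           (\<Sum>(A, B) \<in> adm_pairs n k. \<Prod>(i, j) \<in> A \<union> B. ent M i j) :])"
    by (rule sum.cong[OF refl], rule const_mult_sum[symmetric], rule finite_adm)
  finally show ?thesis by (simp only: X_def)
qed

end
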